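(* Let $V$ be a finite set and let $(V,G)$ be an association scheme with identity relation $1=\{(v,v)\mid v\in V\}$. Let $\equiv_G$ denote the equivalence relation on $V\times V$ whose classes are the relations in $G$. Let $\mathcal{P}_1=\{V\}$, $\mathcal{P}_2=G\setminus\{1\}$, and let $\mathcal{P}_3$ be the partition of $V^{(3)}$ such that $(u_1,u_2,u_3)$ and $(v_1,v_2,v_3)$ lie in the same class if and only if $(u_1,u_2)\equiv_G(v_1,v_2)$, $(u_1,u_3)\equiv_G(v_1,v_3)$ and $(u_2,u_3)\equiv_G(v_2,v_3)$. Then $\{\mathcal{P}_1,\mathcal{P}_2,\mathcal{P}_3\}$ is a $3$-scheme on $V$.
   Context: For a finite set $V$ and $s\geq1$, let $V^{(s)}$ be the set of $s$-tuples of pairwise distinct elements of $V$. For $s>1$ and $1\leq i\leq s$, $\pi^s_i:V^{(s)}\to V^{(s-1)}$ deletes the $i$-th coordinate. $\mathrm{Symm}_s$ acts on $V^{(s)}$ by $(v_1,\dots,v_s)^\tau=(v_{1^\tau},\dots,v_{s^\tau})$. An $m$-collection on $V$ is a set $\{\mathcal{P}_1,\dots,\mathcal{P}_m\}$ where $\mathcal{P}_s$ is a partition of $V^{(s)}$ (classes are called colors). It is an $m$-scheme if for every $1<s\leq m$: (compatibility) whenever $\bar u,\bar v$ lie in the same color of $\mathcal{P}_s$, for every $i$ the tuples $\pi^s_i(\bar u),\pi^s_i(\bar v)$ lie in the same color of $\mathcal{P}_{s-1}$; (regularity) whenever $\bar u,\bar v$ lie in the same color of $\mathcal{P}_{s-1}$,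 for every $1\leq i\leq s$ and every $P\in\mathcal{P}_s$, $\#\{\bar u'\in P\mid \pi^s_i(\bar u')=\bar u\}=\#\{\bar v'\in P\mid\pi^s_i(\bar v')=\bar v\}$; (invariance) for every $P\in\mathcal{P}_s$ and $\tau\in\mathrm{Symm}_s$, $\{\bar v^\tau\mid\bar v\in P\}\in\mathcal{P}_s$. An association scheme is a pair $(X,G)$ with $X$ finite and $G$ a partition of $X\times X$ containing the identity relation, closed under $g\mapsto\{(y,x)\mid(x,y)\in g\}$, and such that for all $f,g,h\in G$ the number $\#\{\gamma\mid(\alpha,\gamma)\in f,(\gamma,\beta)\in g\}$ is the same for all $(\alpha,\beta)\in h$. *)

theory Defs
  imports "HOL-Library.Disjoint_Sets" "HOL-Combinatorics.Permutations"
begin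

definition tuples :: "'a set \<Rightarrow> nat \<Rightarrow> 'a list set" where
  "tuples V s = {xs. length xs = s \<and> distinct xs \<and> set xs \<subseteq> V}"

text \<open>pi_i: delete the i-th coordinate (1-indexed).\<close>
definition del_coord :: "nat \<Rightarrow> 'a list \<Rightarrow> 'a list" where
  "del_coord i xs = take (i - 1) xs @ drop i xs"

text \<open>Action of a permutation tau of {0..<s} (0-indexed coordinates):
  (v_1,...,v_s)^tau = (v_{1^tau},...,v_{s^tau}).\<close>
definition perm_tuple :: "(nat \<Rightarrow> nat) \<Rightarrow> 'a list \<Rightarrow> 'a list" where
  "perm_tuple \<tau> xs = map (\<lambda>i. xs ! (\<tau> i)) [0..<length xs]"

definition m_collection :: "'a set \<Rightarrow> nat \<Rightarrow> (nat \<Rightarrow> 'a list set set) \<Rightarrow> bool" where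
  "m_collection V m P \<longleftrightarrow> (\<forall>s\<in>{1..m}. partition_on (tuples V s) (P s))"

definition m_scheme :: "'a set \<Rightarrow> nat \<Rightarrow> (nat \<Rightarrow> 'a list set set) \<Rightarrow> bool" where
  "m_scheme V m P \<longleftrightarrow> m_collection V m P \<and>
    (\<forall>s\<in>{2..m}.
      (\<comment> \<open>compatibility\<close>
       \<forall>C\<in>P s. \<forall>u\<in>C. \<forall>v\<in>C. \<forall>i\<in>{1..s}.
          \<exists>D\<in>P (s - 1). del_coord i u \<in> D \<and> del_coord i v \<in> D) \<and>
      (\<comment> \<open>regularity\<close>
       \<forall>D\<in>P (s - 1). \<forall>u\<in>D. \<forall>v\<in>D. \<forall>i\<in>{1..s}. \<forall>C\<in>P s.
          card {u'\<in>C. del_coord i u' = u} = card {v'\<in>C. del_coord i v' = v}) \<and>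
      (\<comment> \<open>invariance\<close>
       \<forall>C\<in>P s. \<forall>\<tau>. \<tau> permutes {0..<s} \<longrightarrow> perm_tuple \<tau> ` C \<in> P s))"

definition association_scheme :: "'a set \<Rightarrow> ('a \<times> 'a) set set \<Rightarrow> bool" where
  "association_scheme X G \<longleftrightarrow> finite X \<and> partition_on (X \<times> X) G \<and> Id_on X \<in> G \<and>
    (\<forall>g\<in>G. converse g \<in> G) \<and>
    (\<forall>f\<in>G. \<forall>g\<in>G. \<forall>h\<in>G. \<forall>p\<in>h. \<forall>q\<in>h.
       card {\<gamma>. (fst p, \<gamma>) \<in> f \<and> (\<gamma>, snd p) \<in> g} = card {\<gamma>. (fst q, \<gamma>) \<in> f \<and> (\<gamma>, snd q) \<in> g})"

definition equiv_G :: "('a \<times> 'a) set set \<Rightarrow> 'a \<times> 'a \<Rightarrow> 'a \<times> 'a \<Rightarrow> bool" where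
  "equiv_G G x y \<longleftrightarrow> (\<exists>g\<in>G. x \<in> g \<and> y \<in> g)"

definition rel_tuples :: "('a \<times> 'a) set \<Rightarrow> 'a list set" where
  "rel_tuples g = {[x, y] | x y. (x, y) \<in> g}"

definition P3_of :: "'a set \<Rightarrow> ('a \<times> 'a) set set \<Rightarrow> 'a list set set" where
  "P3_of V G = (\<lambda>u. {w \<in> tuples V 3.
      equiv_G G (u!0, u!1) (w!0, w!1) \<and> equiv_G G (u!0, u!2) (w!0, w!2) \<and>
      equiv_G G (u!1, u!2) (w!1, w!2)}) ` tuples V 3"

end

theory Submission
  imports Defs
begin

definition trip :: "('a \<times> 'a) set \<Rightarrow> ('a \<times> 'a) set \<Rightarrow> ('a \<times> 'a) set \<Rightarrow> 'a list set" where
  "trip f g h = {[x,y,z] | x y z. (x,y)\<in>f \<and> (x,z)\<in>g \<and> (y,z)\<in>h}"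

lemma tup1: "l \<in> tuples V (Suc 0) \<longleftrightarrow> (\<exists>x. l = [x] \<and> x \<in> V)"
  by (auto simp: tuples_def length_Suc_conv)

lemma tup2: "l \<in> tuples V 2 \<longleftrightarrow> (\<exists>x y. l = [x,y] \<and> x \<noteq> y \<and> x \<in> V \<and> y \<in> V)"
  by (auto simp: tuples_def length_Suc_conv numeral_2_eq_2)

lemma tup3: "l \<in> tuples V 3 \<longleftrightarrow> (\<exists>x y z. l = [x,y,z] \<and> x \<noteq> y \<and> x \<noteq> z \<and> y \<noteq> z \<and> x \<in> V \<and> y \<in> V \<and> z \<in> V)"
  by (auto simp: tuples_def length_Suc_conv numeral_3_eq_3)

lemma perm2: "perm_tuple \<tau> [x,y] = [[x,y]!\<tau> 0, [x,y]!\<tau> 1]"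
  by (simp add: perm_tuple_def upt_rec numeral_2_eq_2)

lemma perm3: "perm_tuple \<tau> [x,y,z] = [[x,y,z]!\<tau> 0, [x,y,z]!\<tau> 1, [x,y,z]!\<tau> 2]"
  by (simp add: perm_tuple_def upt_rec numeral_2_eq_2)

lemma perms2: assumes "\<tau> permutes {0..<(2::nat)}"
  shows "(\<tau> 0 = 0 \<and> \<tau> 1 = 1) \<or> (\<tau> 0 = 1 \<and> \<tau> 1 = 0)"
proof -
  have a: "\<tau> i < 2" if "i < 2" for i using permutes_in_image[OF assms] that by auto
  have "inj \<tau>" using permutes_inj[OF assms] .
  hence "\<tau> 0 \<noteq> \<tau> 1" using inj_eq[OF \<open>inj \<tau>\<close>, of 0 1] by simp
  with a[of 0] a[of 1] show ?thesis by linarith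
qed

lemma perms3: assumes "\<tau> permutes {0..<(3::nat)}"
  shows "(\<tau> 0 = 0 \<and> \<tau> 1 = 1 \<and> \<tau> 2 = 2) \<or> (\<tau> 0 = 0 \<and> \<tau> 1 = 2 \<and> \<tau> 2 = 1) \<or>
         (\<tau> 0 = 1 \<and> \<tau> 1 = 0 \<and> \<tau> 2 = 2) \<or> (\<tau> 0 = 1 \<and> \<tau> 1 = 2 \<and> \<tau> 2 = 0) \<or>
         (\<tau> 0 = 2 \<and> \<tau> 1 = 0 \<and> \<tau> 2 = 1) \<or> (\<tau> 0 = 2 \<and> \<tau> 1 = 1 \<and> \<tau> 2 = 0)"
proof -
  have a: "\<tau> i < 3" if "i < 3" for i using permutes_in_image[OF assms] that by auto
  have "inj \<tau>" using permutes_inj[OF assms] .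
  hence "\<tau> 0 \<noteq> \<tau> 1" "\<tau> 0 \<noteq> \<tau> 2" "\<tau> 1 \<noteq> \<tau> 2"
    using inj_eq[OF \<open>inj \<tau>\<close>, of 0 1] inj_eq[OF \<open>inj \<tau>\<close>, of 0 2] inj_eq[OF \<open>inj \<tau>\<close>, of 1 2] by simp_all
  moreover have "\<tau> 0 = 0 \<or> \<tau> 0 = 1 \<or> \<tau> 0 = 2" using a[of 0] by linarith
  moreover have "\<tau> 1 = 0 \<or> \<tau> 1 = 1 \<or> \<tau> 1 = 2" using a[of 1] by linarith
  moreover have "\<tau> 2 = 0 \<or> \<tau> 2 = 1 \<or> \<tau> 2 = 2" using a[of 2] by linarith
  ultimately show ?thesis by (elim disjE) simp_all
qed

locale AS = fixes V :: "'a set" and G :: "('a \<times> 'a) set set"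
  assumes as: "association_scheme V G"
begin

lemma part: "partition_on (V\<times>V) G" using as by (simp add: association_scheme_def)
lemma IdG: "Id_on V \<in> G" using as by (simp add: association_scheme_def)
lemma conv: "g\<in>G \<Longrightarrow> converse g \<in> G" using as by (simp add: association_scheme_def)
lemma ascard: assumes "f\<in>G" "g\<in>G" "h\<in>G" "(a,b)\<in>h" "(c,d)\<in>h"
  shows "card {x. (a,x)\<in>f \<and> (x,b)\<in>g} = card {x. (c,x)\<in>f \<and> (x,d)\<in>g}"
proof -
  have "\<forall>p\<in>h. \<forall>q\<in>h. card {\<gamma>. (fst p, \<gamma>) \<in> f \<and> (\<gamma>, snd p) \<in> g} = card {\<gamma>. (fst q, \<gamma>) \<in> f \<and> (\<gamma>, snd q) \<in> g}"
    using as assms(1-3) unfolding association_scheme_def by blast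
  from this[rule_format, OF assms(4,5)] show ?thesis by simp
qed
lemma uniq: assumes "g\<in>G" "g'\<in>G" "x\<in>g" "x\<in>g'" shows "g=g'"
proof (rule ccontr)
  assume "g \<noteq> g'"
  hence "disjnt g g'" using partition_onD2[OF part] assms(1,2) unfolding pairwise_def by blast
  thus False using assms(3,4) by (auto simp: disjnt_def)
qed
lemma sub: assumes "g\<in>G" "(x,y)\<in>g" shows "x\<in>V \<and> y\<in>V"
proof -
  have "(x,y) \<in> V\<times>V" by (subst partition_onD1[OF part]) (rule UnionI[OF assms])
  thus ?thesis by simp
qed
lemma nonempty: "g\<in>G \<Longrightarrow> g\<noteq>{}"
  using partition_onD3[OF part] by metis
lemma cover: assumes "x\<in>V" "y\<in>V" shows "\<exists>g\<in>G. (x,y)\<in>g"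
proof -
  have "(x,y) \<in> V\<times>V" using assms by simp
  hence "(x,y) \<in> \<Union>G" by (subst (asm) partition_onD1[OF part])
  thus ?thesis by (rule UnionE) blast
qed
lemma offdiag: assumes "g\<in>G" "g\<noteq>Id_on V" "(x,y)\<in>g" shows "x\<noteq>y \<and> x\<in>V \<and> y\<in>V"
proof -
  have v: "x\<in>V \<and> y\<in>V" using sub assms by blast
  have "x \<noteq> y"
  proof
    assume "x = y"
    hence "(x,y) \<in> Id_on V" using v Id_onI by blast
    thus False using uniq[OF assms(1) IdG assms(3)] assms(2) by blast
  qed
  thus ?thesis using v by blast
qed
lemma conv_nId: assumes "g\<in>G-{Id_on V}" shows "converse g \<in> G-{Id_on V}"
proof -
  have "converse g \<noteq> Id_on V"
  proof
    assume "converse g = Id_on V"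
    hence "g = converse (Id_on V)" by (metis converse_converse)
    thus False using assms by simp
  qed
  thus ?thesis using conv assms by blast
qed
lemma Vne: "V \<noteq> {}" using nonempty IdG by auto


abbreviation "GI \<equiv> G - {Id_on V}"

lemma trip_mem: "l \<in> trip f g h \<longleftrightarrow> (\<exists>x y z. l = [x,y,z] \<and> (x,y)\<in>f \<and> (x,z)\<in>g \<and> (y,z)\<in>h)"
  by (auto simp: trip_def)

lemma trip_sub: assumes "f\<in>GI" "g\<in>GI" "h\<in>GI" shows "trip f g h \<subseteq> tuples V 3"
proof
  fix l assume "l \<in> trip f g h"
  then obtain x y z where l: "l = [x,y,z]" "(x,y)\<in>f" "(x,z)\<in>g" "(y,z)\<in>h" by (auto simp: trip_mem)
  have "x\<noteq>y \<and> x\<in>V \<and> y\<in>V" using offdiag[of f x y] assms l by blast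
  moreover have "x\<noteq>z \<and> x\<in>V \<and> z\<in>V" using offdiag[of g x z] assms l by blast
  moreover have "y\<noteq>z \<and> y\<in>V \<and> z\<in>V" using offdiag[of h y z] assms l by blast
  ultimately show "l \<in> tuples V 3" using l(1) by (simp add: tup3)
qed

lemma eqG: assumes "r\<in>G" "(a,b)\<in>r" shows "equiv_G G (a,b) (c,d) \<longleftrightarrow> (c,d)\<in>r"
proof
  assume "equiv_G G (a,b) (c,d)"
  then obtain g where g: "g\<in>G" "(a,b)\<in>g" "(c,d)\<in>g" unfolding equiv_G_def by blast
  hence "g = r" using uniq[OF g(1) assms(1) g(2) assms(2)] by simp
  thus "(c,d)\<in>r" using g by simp
next
  assume "(c,d)\<in>r"
  thus "equiv_G G (a,b) (c,d)" unfolding equiv_G_def using assms by blast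
qed

lemma notId: "r\<in>G \<Longrightarrow> (a,b)\<in>r \<Longrightarrow> a\<noteq>b \<Longrightarrow> r\<in>GI"
  by auto

lemma class_eq:
  assumes w: "w = [x,y,z]" "w\<in>tuples V 3" and r: "f\<in>G" "g\<in>G" "h\<in>G" "(x,y)\<in>f" "(x,z)\<in>g" "(y,z)\<in>h"
  shows "{u\<in>tuples V 3. equiv_G G (w!0,w!1) (u!0,u!1) \<and> equiv_G G (w!0,w!2) (u!0,u!2) \<and>
      equiv_G G (w!1,w!2) (u!1,u!2)} = trip f g h"
proof -
  have d: "x\<noteq>y" "x\<noteq>z" "y\<noteq>z" using w by (auto simp: tup3)
  have I: "f\<in>GI" "g\<in>GI" "h\<in>GI" using r d by auto
  show ?thesis
  proof (rule set_eqI)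
    fix u
    show "u \<in> {u\<in>tuples V 3. equiv_G G (w!0,w!1) (u!0,u!1) \<and> equiv_G G (w!0,w!2) (u!0,u!2) \<and>
      equiv_G G (w!1,w!2) (u!1,u!2)} \<longleftrightarrow> u \<in> trip f g h"
    proof
      assume "u \<in> {u\<in>tuples V 3. equiv_G G (w!0,w!1) (u!0,u!1) \<and> equiv_G G (w!0,w!2) (u!0,u!2) \<and>
          equiv_G G (w!1,w!2) (u!1,u!2)}"
      then obtain a b c where u: "u = [a,b,c]" "equiv_G G (x,y) (a,b)" "equiv_G G (x,z) (a,c)" "equiv_G G (y,z) (b,c)"
        using w(1) by (auto simp: tup3)
      thus "u \<in> trip f g h" using eqG[OF r(1,4)] eqG[OF r(2,5)] eqG[OF r(3,6)] by (auto simp: trip_mem)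
    next
      assume u: "u \<in> trip f g h"
      hence "u \<in> tuples V 3" using trip_sub[OF I] by blast
      moreover obtain a b c where "u = [a,b,c]" "(a,b)\<in>f" "(a,c)\<in>g" "(b,c)\<in>h" using u by (auto simp: trip_mem)
      ultimately show "u \<in> {u\<in>tuples V 3. equiv_G G (w!0,w!1) (u!0,u!1) \<and> equiv_G G (w!0,w!2) (u!0,u!2) \<and>
          equiv_G G (w!1,w!2) (u!1,u!2)}"
        using eqG[OF r(1,4)] eqG[OF r(2,5)] eqG[OF r(3,6)] w(1) by auto
    qed
  qed
qed

lemma P3_eq: "P3_of V G = {trip f g h | f g h. f\<in>GI \<and> g\<in>GI \<and> h\<in>GI \<and> trip f g h \<noteq> {}}"
proof (rule set_eqI, rule iffI)
  fix C assume "C \<in> P3_of V G"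
  then obtain w where w: "w \<in> tuples V 3" and C: "C = {u\<in>tuples V 3. equiv_G G (w!0,w!1) (u!0,u!1) \<and> equiv_G G (w!0,w!2) (u!0,u!2) \<and>
      equiv_G G (w!1,w!2) (u!1,u!2)}" unfolding P3_of_def by blast
  obtain x y z where xyz: "w = [x,y,z]" "x\<noteq>y" "x\<noteq>z" "y\<noteq>z" "x\<in>V" "y\<in>V" "z\<in>V" using w by (auto simp: tup3)
  obtain f where f: "f\<in>G" "(x,y)\<in>f" using cover xyz by blast
  obtain g where g: "g\<in>G" "(x,z)\<in>g" using cover xyz by blast
  obtain h where h: "h\<in>G" "(y,z)\<in>h" using cover xyz by blast
  have "C = trip f g h" using class_eq[OF xyz(1) w f(1) g(1) h(1) f(2) g(2) h(2)] C by simp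
  moreover have "w \<in> trip f g h" using f g h xyz(1) by (auto simp: trip_mem)
  moreover have "f\<in>GI" "g\<in>GI" "h\<in>GI" using f g h xyz by auto
  ultimately show "C \<in> {trip f g h | f g h. f\<in>GI \<and> g\<in>GI \<and> h\<in>GI \<and> trip f g h \<noteq> {}}" by blast
next
  fix C assume "C \<in> {trip f g h | f g h. f\<in>GI \<and> g\<in>GI \<and> h\<in>GI \<and> trip f g h \<noteq> {}}"
  then obtain f g h where C: "C = trip f g h" "f\<in>GI" "g\<in>GI" "h\<in>GI" "trip f g h \<noteq> {}" by blast
  then obtain w where w: "w \<in> trip f g h" by blast
  hence wt: "w \<in> tuples V 3" using trip_sub[OF C(2-4)] by blast
  obtain x y z where xyz: "w = [x,y,z]" "(x,y)\<in>f" "(x,z)\<in>g" "(y,z)\<in>h" using w by (auto simp: trip_mem)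
  have "C = {u\<in>tuples V 3. equiv_G G (w!0,w!1) (u!0,u!1) \<and> equiv_G G (w!0,w!2) (u!0,u!2) \<and>
      equiv_G G (w!1,w!2) (u!1,u!2)}" using class_eq[OF xyz(1) wt _ _ _ xyz(2-4)] C by simp
  thus "C \<in> P3_of V G" unfolding P3_of_def using wt by blast
qed


lemma rel_mem: "l \<in> rel_tuples k \<longleftrightarrow> (\<exists>x y. l = [x,y] \<and> (x,y)\<in>k)"
  by (auto simp: rel_tuples_def)

lemma part1: "partition_on (tuples V 1) {(\<lambda>v. [v]) ` V}"
proof -
  have "tuples V 1 = (\<lambda>v. [v]) ` V" using tup1[of _ V] by auto
  thus ?thesis using Vne partition_on_space[of "(\<lambda>v. [v]) ` V"] by simp
qed

lemma part2: "partition_on (tuples V 2) (rel_tuples ` GI)"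
proof (rule partition_onI)
  show "\<Union>(rel_tuples ` GI) = tuples V 2"
  proof
    show "\<Union>(rel_tuples ` GI) \<subseteq> tuples V 2"
    proof
      fix l assume "l \<in> \<Union>(rel_tuples ` GI)"
      then obtain k x y where "k\<in>GI" "l=[x,y]" "(x,y)\<in>k" by (auto simp: rel_mem)
      thus "l \<in> tuples V 2" using offdiag[of k x y] by (auto simp: tup2)
    qed
  next
    show "tuples V 2 \<subseteq> \<Union>(rel_tuples ` GI)"
    proof
      fix l assume "l \<in> tuples V 2"
      then obtain x y where xy: "l=[x,y]" "x\<noteq>y" "x\<in>V" "y\<in>V" by (auto simp: tup2)
      then obtain k where "k\<in>G" "(x,y)\<in>k" using cover by blast
      hence "k\<in>GI" "l \<in> rel_tuples k" using xy by (auto simp: rel_mem)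
      thus "l \<in> \<Union>(rel_tuples ` GI)" by blast
    qed
  qed
next
  fix p q assume "p \<in> rel_tuples ` GI" "q \<in> rel_tuples ` GI" "p\<noteq>q"
  then obtain k k' where k0: "k\<in>GI" "k'\<in>GI" "p = rel_tuples k" "q = rel_tuples k'" by blast
  hence k: "k\<in>GI" "k'\<in>GI" "p = rel_tuples k" "q = rel_tuples k'" "k\<noteq>k'" using \<open>p\<noteq>q\<close> by auto
  show "disjnt p q" unfolding disjnt_def
  proof (rule ccontr)
    assume "p \<inter> q \<noteq> {}"
    then obtain l where l: "l \<in> rel_tuples k" "l \<in> rel_tuples k'" using k by blast
    then obtain x y where "l = [x,y]" "(x,y)\<in>k" by (auto simp: rel_mem)
    moreover obtain x' y' where "l = [x',y']" "(x',y')\<in>k'" using l by (auto simp: rel_mem)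
    ultimately have "(x,y)\<in>k" "(x,y)\<in>k'" by auto
    thus False using uniq[of k k' "(x,y)"] k by blast
  qed
next
  show "{} \<notin> rel_tuples ` GI"
  proof
    assume "{} \<in> rel_tuples ` GI"
    then obtain k where "k\<in>GI" "rel_tuples k = {}" by auto
    moreover obtain x y where "(x,y)\<in>k" using nonempty calculation by fastforce
    hence "[x,y] \<in> rel_tuples k" unfolding rel_tuples_def by blast
    ultimately show False by simp
  qed
qed

lemma part3: "partition_on (tuples V 3) (P3_of V G)"
  unfolding P3_eq
proof (rule partition_onI)
  show "\<Union>{trip f g h | f g h. f\<in>GI \<and> g\<in>GI \<and> h\<in>GI \<and> trip f g h \<noteq> {}} = tuples V 3"
  proof
    show "\<Union>{trip f g h | f g h. f\<in>GI \<and> g\<in>GI \<and> h\<in>GI \<and> trip f g h \<noteq> {}} \<subseteq> tuples V 3"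
      using trip_sub by blast
  next
    show "tuples V 3 \<subseteq> \<Union>{trip f g h | f g h. f\<in>GI \<and> g\<in>GI \<and> h\<in>GI \<and> trip f g h \<noteq> {}}"
    proof
      fix w assume w: "w \<in> tuples V 3"
      obtain x y z where xyz: "w = [x,y,z]" "x\<noteq>y" "x\<noteq>z" "y\<noteq>z" "x\<in>V" "y\<in>V" "z\<in>V" using w by (auto simp: tup3)
      obtain f where f: "f\<in>G" "(x,y)\<in>f" using cover xyz by blast
      obtain g where g: "g\<in>G" "(x,z)\<in>g" using cover xyz by blast
      obtain h where h: "h\<in>G" "(y,z)\<in>h" using cover xyz by blast
      have "w \<in> trip f g h" using f g h xyz(1) by (auto simp: trip_mem)
      moreover have "f\<in>GI" "g\<in>GI" "h\<in>GI" using f g h xyz by auto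
      ultimately show "w \<in> \<Union>{trip f g h | f g h. f\<in>GI \<and> g\<in>GI \<and> h\<in>GI \<and> trip f g h \<noteq> {}}" by blast
    qed
  qed
next
  fix p q assume "p \<in> {trip f g h | f g h. f\<in>GI \<and> g\<in>GI \<and> h\<in>GI \<and> trip f g h \<noteq> {}}"
    "q \<in> {trip f g h | f g h. f\<in>GI \<and> g\<in>GI \<and> h\<in>GI \<and> trip f g h \<noteq> {}}" "p \<noteq> q"
  then obtain f g h f' g' h' where F: "p = trip f g h" "q = trip f' g' h'" "f\<in>GI" "g\<in>GI" "h\<in>GI"
    "f'\<in>GI" "g'\<in>GI" "h'\<in>GI" by blast
  show "disjnt p q" unfolding disjnt_def
  proof (rule ccontr)
    assume "p \<inter> q \<noteq> {}"
    then obtain l where l: "l \<in> trip f g h" "l \<in> trip f' g' h'" using F(1,2) by blast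
    then obtain x y z where "l = [x,y,z]" "(x,y)\<in>f" "(x,z)\<in>g" "(y,z)\<in>h" by (auto simp: trip_mem)
    moreover obtain x' y' z' where "l = [x',y',z']" "(x',y')\<in>f'" "(x',z')\<in>g'" "(y',z')\<in>h'" using l by (auto simp: trip_mem)
    ultimately have "(x,y)\<in>f" "(x,z)\<in>g" "(y,z)\<in>h" "(x,y)\<in>f'" "(x,z)\<in>g'" "(y,z)\<in>h'" by auto
    hence "f=f'" "g=g'" "h=h'" using uniq[of f f' "(x,y)"] uniq[of g g' "(x,z)"] uniq[of h h' "(y,z)"] F by auto
    thus False using F \<open>p\<noteq>q\<close> by simp
  qed
qed blast

lemma card_img: "inj F \<Longrightarrow> card (F ` S) = card S"
  by (meson card_image inj_on_subset subset_UNIV)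

lemma reg_core: assumes "f1\<in>G" "f2\<in>G" "k\<in>G" "h\<in>G" "(a,b)\<in>k" "(c,d)\<in>k"
  shows "card {x. (a,x)\<in>f1 \<and> (x,b)\<in>f2 \<and> (a,b)\<in>h} = card {x. (c,x)\<in>f1 \<and> (x,d)\<in>f2 \<and> (c,d)\<in>h}"
proof (cases "(a,b)\<in>h")
  case True
  hence "h = k" using uniq assms by blast
  thus ?thesis using assms ascard[OF assms(1,2,3,5,6)] by simp
next
  case False
  hence "(c,d)\<notin>h" using uniq assms by blast
  thus ?thesis using False by simp
qed


lemma dc2: "del_coord 1 [x,y] = [y]" "del_coord 2 [x,y] = [x]" "del_coord (Suc 0) [x,y] = [y]"
  by (simp_all add: del_coord_def numeral_2_eq_2)
lemma dc3: "del_coord 1 [x,y,z] = [y,z]" "del_coord 2 [x,y,z] = [x,z]" "del_coord 3 [x,y,z] = [x,y]"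
  "del_coord (Suc 0) [x,y,z] = [y,z]"
  by (simp_all add: del_coord_def numeral_2_eq_2 numeral_3_eq_3)

lemma compat2: assumes "C \<in> rel_tuples ` GI" "u\<in>C" "v\<in>C" "i\<in>{1..2}"
  shows "\<exists>D\<in>{(\<lambda>v. [v]) ` V}. del_coord i u \<in> D \<and> del_coord i v \<in> D"
proof -
  obtain k where k: "k\<in>GI" "C = rel_tuples k" using assms by blast
  obtain a b where u: "u=[a,b]" "(a,b)\<in>k" using assms k by (auto simp: rel_mem)
  obtain c d where v: "v=[c,d]" "(c,d)\<in>k" using assms k by (auto simp: rel_mem)
  have "a\<in>V" "b\<in>V" "c\<in>V" "d\<in>V" using sub u v k by blast+
  moreover have "i = 1 \<or> i = 2" using assms by auto
  ultimately show ?thesis using u v by (auto simp: dc2)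
qed

lemma compat3: assumes "C \<in> P3_of V G" "u\<in>C" "v\<in>C" "i\<in>{1..3}"
  shows "\<exists>D\<in>rel_tuples ` GI. del_coord i u \<in> D \<and> del_coord i v \<in> D"
proof -
  obtain f g h where F: "C = trip f g h" "f\<in>GI" "g\<in>GI" "h\<in>GI" using assms(1) unfolding P3_eq by blast
  obtain a b c where u: "u=[a,b,c]" "(a,b)\<in>f" "(a,c)\<in>g" "(b,c)\<in>h" using assms F by (auto simp: trip_mem)
  obtain a' b' c' where v: "v=[a',b',c']" "(a',b')\<in>f" "(a',c')\<in>g" "(b',c')\<in>h" using assms F by (auto simp: trip_mem)
  have "i = 1 \<or> i = 2 \<or> i = 3" using assms by auto
  moreover have "[b,c] \<in> rel_tuples h" "[b',c'] \<in> rel_tuples h" "[a,c] \<in> rel_tuples g" "[a',c'] \<in> rel_tuples g"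
    "[a,b] \<in> rel_tuples f" "[a',b'] \<in> rel_tuples f" using u v by (auto simp: rel_mem)
  ultimately show ?thesis using u(1) v(1) F by (auto simp: dc3)
qed

lemma reg2: assumes "u\<in>(\<lambda>v. [v]) ` V" "v\<in>(\<lambda>v. [v]) ` V" "i\<in>{1..2}" "C\<in>rel_tuples ` GI"
  shows "card {u'\<in>C. del_coord i u' = u} = card {v'\<in>C. del_coord i v' = v}"
proof -
  obtain k where k: "k\<in>GI" "C = rel_tuples k" using assms by blast
  have kc: "converse k \<in> G" using conv k by blast
  have key: "card {u'\<in>C. del_coord i u' = [a]} = (if i = 1 then card {x. (a,x)\<in>converse k \<and> (x,a)\<in>k}
      else card {x. (a,x)\<in>k \<and> (x,a)\<in>converse k})" for a
  proof (cases "i = 1")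
    case True
    have "{u'\<in>C. del_coord i u' = [a]} = (\<lambda>x. [x,a]) ` {x. (a,x)\<in>converse k \<and> (x,a)\<in>k}"
      using True k by (auto simp: rel_mem dc2)
    thus ?thesis using True by (simp add: card_img inj_def)
  next
    case False
    hence "i = 2" using assms by auto
    have "{u'\<in>C. del_coord i u' = [a]} = (\<lambda>x. [a,x]) ` {x. (a,x)\<in>k \<and> (x,a)\<in>converse k}"
      using \<open>i=2\<close> k by (auto simp: rel_mem dc2)
    thus ?thesis using False by (simp add: card_img inj_def)
  qed
  obtain a b where ab: "u=[a]" "v=[b]" "a\<in>V" "b\<in>V" using assms(1,2) by blast
  have "(a,a)\<in>Id_on V" "(b,b)\<in>Id_on V" using ab by auto
  moreover have kG: "k \<in> G" using k by blast
  ultimately have e1: "card {x. (a,x)\<in>converse k \<and> (x,a)\<in>k} = card {x. (b,x)\<in>converse k \<and> (x,b)\<in>k}"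
    and e2: "card {x. (a,x)\<in>k \<and> (x,a)\<in>converse k} = card {x. (b,x)\<in>k \<and> (x,b)\<in>converse k}"
    using ascard[OF kc kG IdG] ascard[OF kG kc IdG] by blast+
  show ?thesis unfolding ab(1,2) key using e1 e2 by simp
qed

lemma reg3: assumes "D\<in>rel_tuples ` GI" "u\<in>D" "v\<in>D" "i\<in>{1..3}" "C\<in>P3_of V G"
  shows "card {u'\<in>C. del_coord i u' = u} = card {v'\<in>C. del_coord i v' = v}"
proof -
  obtain k where k: "k\<in>GI" "D = rel_tuples k" using assms by blast
  obtain f g h where F: "C = trip f g h" "f\<in>GI" "g\<in>GI" "h\<in>GI" using assms(5) unfolding P3_eq by blast
  have fc: "converse f \<in> G" "converse h \<in> G" using conv F by blast+
  have key: "card {u'\<in>C. del_coord i u' = [a,b]} = (if i = 1 then card {x. (a,x)\<in>converse f \<and> (x,b)\<in>g \<and> (a,b)\<in>h}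
      else if i = 2 then card {x. (a,x)\<in>f \<and> (x,b)\<in>h \<and> (a,b)\<in>g}
      else card {x. (a,x)\<in>g \<and> (x,b)\<in>converse h \<and> (a,b)\<in>f})" for a b
  proof -
    have "i = 1 \<or> i = 2 \<or> i = 3" using assms by auto
    moreover
    { assume i: "i = 1"
      have "{u'\<in>C. del_coord i u' = [a,b]} = (\<lambda>x. [x,a,b]) ` {x. (a,x)\<in>converse f \<and> (x,b)\<in>g \<and> (a,b)\<in>h}"
        using i F by (auto simp: trip_mem dc3)
      hence ?thesis using i by (simp add: card_img inj_def) }
    moreover
    { assume i: "i = 2"
      have "{u'\<in>C. del_coord i u' = [a,b]} = (\<lambda>x. [a,x,b]) ` {x. (a,x)\<in>f \<and> (x,b)\<in>h \<and> (a,b)\<in>g}"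
        using i F by (auto simp: trip_mem dc3)
      hence ?thesis using i by (simp add: card_img inj_def) }
    moreover
    { assume i: "i = 3"
      have "{u'\<in>C. del_coord i u' = [a,b]} = (\<lambda>x. [a,b,x]) ` {x. (a,x)\<in>g \<and> (x,b)\<in>converse h \<and> (a,b)\<in>f}"
        using i F by (auto simp: trip_mem dc3)
      hence ?thesis using i by (simp add: card_img inj_def) }
    ultimately show ?thesis by blast
  qed
  obtain a b where u: "u=[a,b]" "(a,b)\<in>k" using assms k by (auto simp: rel_mem)
  obtain c d where v: "v=[c,d]" "(c,d)\<in>k" using assms k by (auto simp: rel_mem)
  have kG: "k\<in>G" using k by blast
  show ?thesis unfolding u(1) v(1) key
    using reg_core[OF fc(1) _ kG _ u(2) v(2)] reg_core[OF _ _ kG _ u(2) v(2)] reg_core[OF _ fc(2) kG _ u(2) v(2)] F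
    by auto
qed


lemma inv2: assumes "C\<in>rel_tuples ` GI" "\<tau> permutes {0..<(2::nat)}"
  shows "perm_tuple \<tau> ` C \<in> rel_tuples ` GI"
proof -
  obtain k where k: "k\<in>GI" "C = rel_tuples k" using assms by blast
  from perms2[OF assms(2)] show ?thesis
  proof
    assume t: "\<tau> 0 = 0 \<and> \<tau> 1 = 1"
    have "perm_tuple \<tau> l = l" if "l \<in> C" for l
      using that k t by (auto simp: rel_mem perm2)
    hence "perm_tuple \<tau> ` C = C" by simp
    thus ?thesis using assms(1) by simp
  next
    assume t: "\<tau> 0 = 1 \<and> \<tau> 1 = 0"
    have "perm_tuple \<tau> ` C = rel_tuples (converse k)"
    proof
      show "perm_tuple \<tau> ` C \<subseteq> rel_tuples (converse k)"
        using k t by (auto simp: rel_mem perm2)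
    next
      show "rel_tuples (converse k) \<subseteq> perm_tuple \<tau> ` C"
      proof
        fix l assume "l \<in> rel_tuples (converse k)"
        then obtain x y where l: "l = [x,y]" "(y,x)\<in>k" by (auto simp: rel_mem)
        have "[y,x] \<in> C" using k l by (auto simp: rel_mem)
        moreover have "perm_tuple \<tau> [y,x] = l" using t l by (simp add: perm2)
        ultimately show "l \<in> perm_tuple \<tau> ` C" by (metis image_eqI)
      qed
    qed
    thus ?thesis using conv_nId[OF k(1)] by blast
  qed
qed

lemma img_trip:
  assumes F: "\<And>x y z. perm_tuple \<tau> [x,y,z] = F x y z"
    and fw: "\<And>x y z. (x,y)\<in>f \<Longrightarrow> (x,z)\<in>g \<Longrightarrow> (y,z)\<in>h \<Longrightarrow> F x y z \<in> trip f' g' h'"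
    and bw: "\<And>l. l \<in> trip f' g' h' \<Longrightarrow> \<exists>x y z. (x,y)\<in>f \<and> (x,z)\<in>g \<and> (y,z)\<in>h \<and> l = F x y z"
  shows "perm_tuple \<tau> ` trip f g h = trip f' g' h'"
proof
  show "perm_tuple \<tau> ` trip f g h \<subseteq> trip f' g' h'"
  proof
    fix l assume "l \<in> perm_tuple \<tau> ` trip f g h"
    then obtain x y z where "l = perm_tuple \<tau> [x,y,z]" "(x,y)\<in>f" "(x,z)\<in>g" "(y,z)\<in>h"
      by (auto simp: trip_mem)
    thus "l \<in> trip f' g' h'" using F fw by simp
  qed
next
  show "trip f' g' h' \<subseteq> perm_tuple \<tau> ` trip f g h"
  proof
    fix l assume "l \<in> trip f' g' h'"
    then obtain x y z where "(x,y)\<in>f" "(x,z)\<in>g" "(y,z)\<in>h" "l = F x y z" using bw by blast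
    moreover hence "[x,y,z] \<in> trip f g h" by (auto simp: trip_mem)
    ultimately show "l \<in> perm_tuple \<tau> ` trip f g h" using F by (metis image_eqI)
  qed
qed

lemma inv3: assumes "C\<in>P3_of V G" "\<tau> permutes {0..<(3::nat)}"
  shows "perm_tuple \<tau> ` C \<in> P3_of V G"
proof -
  obtain f g h where T: "C = trip f g h" "f\<in>GI" "g\<in>GI" "h\<in>GI" "trip f g h \<noteq> {}"
    using assms(1) unfolding P3_eq by blast
  have c: "converse f \<in> GI" "converse g \<in> GI" "converse h \<in> GI" using conv_nId T by blast+
  have "\<exists>f' g' h'. f'\<in>GI \<and> g'\<in>GI \<and> h'\<in>GI \<and> perm_tuple \<tau> ` C = trip f' g' h'"
  proof -
    have "(\<tau> 0 = 0 \<and> \<tau> 1 = 1 \<and> \<tau> 2 = 2) \<or> (\<tau> 0 = 0 \<and> \<tau> 1 = 2 \<and> \<tau> 2 = 1) \<or>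
         (\<tau> 0 = 1 \<and> \<tau> 1 = 0 \<and> \<tau> 2 = 2) \<or> (\<tau> 0 = 1 \<and> \<tau> 1 = 2 \<and> \<tau> 2 = 0) \<or>
         (\<tau> 0 = 2 \<and> \<tau> 1 = 0 \<and> \<tau> 2 = 1) \<or> (\<tau> 0 = 2 \<and> \<tau> 1 = 1 \<and> \<tau> 2 = 0)"
      using perms3[OF assms(2)] .
    moreover
    { assume t: "\<tau> 0 = 0 \<and> \<tau> 1 = 1 \<and> \<tau> 2 = 2"
      hence t: "\<tau> 0 = 0 \<and> \<tau> 1 = 1 \<and> \<tau> 2 = 2" "\<tau> (Suc 0) = 1" by simp_all
      have "perm_tuple \<tau> ` trip f g h = trip f g h"
        by (rule img_trip[where F="\<lambda>x y z. [x,y,z]"]) (auto simp: perm3 t trip_mem)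
      hence ?thesis using T by blast }
    moreover
    { assume t: "\<tau> 0 = 0 \<and> \<tau> 1 = 2 \<and> \<tau> 2 = 1"
      hence t: "\<tau> 0 = 0 \<and> \<tau> 1 = 2 \<and> \<tau> 2 = 1" "\<tau> (Suc 0) = 2" by simp_all
      have "perm_tuple \<tau> ` trip f g h = trip g f (converse h)"
        by (rule img_trip[where F="\<lambda>x y z. [x,z,y]"]) (auto simp: perm3 t trip_mem)
      hence ?thesis using T c by blast }
    moreover
    { assume t: "\<tau> 0 = 1 \<and> \<tau> 1 = 0 \<and> \<tau> 2 = 2"
      hence t: "\<tau> 0 = 1 \<and> \<tau> 1 = 0 \<and> \<tau> 2 = 2" "\<tau> (Suc 0) = 0" by simp_all
      have "perm_tuple \<tau> ` trip f g h = trip (converse f) h g"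
        by (rule img_trip[where F="\<lambda>x y z. [y,x,z]"]) (auto simp: perm3 t trip_mem)
      hence ?thesis using T c by blast }
    moreover
    { assume t: "\<tau> 0 = 1 \<and> \<tau> 1 = 2 \<and> \<tau> 2 = 0"
      hence t: "\<tau> 0 = 1 \<and> \<tau> 1 = 2 \<and> \<tau> 2 = 0" "\<tau> (Suc 0) = 2" by simp_all
      have "perm_tuple \<tau> ` trip f g h = trip h (converse f) (converse g)"
        by (rule img_trip[where F="\<lambda>x y z. [y,z,x]"]) (auto simp: perm3 t trip_mem)
      hence ?thesis using T c by blast }
    moreover
    { assume t: "\<tau> 0 = 2 \<and> \<tau> 1 = 0 \<and> \<tau> 2 = 1"
      hence t: "\<tau> 0 = 2 \<and> \<tau> 1 = 0 \<and> \<tau> 2 = 1" "\<tau> (Suc 0) = 0" by simp_all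
      have "perm_tuple \<tau> ` trip f g h = trip (converse g) (converse h) f"
        by (rule img_trip[where F="\<lambda>x y z. [z,x,y]"]) (auto simp: perm3 t trip_mem)
      hence ?thesis using T c by blast }
    moreover
    { assume t: "\<tau> 0 = 2 \<and> \<tau> 1 = 1 \<and> \<tau> 2 = 0"
      hence t: "\<tau> 0 = 2 \<and> \<tau> 1 = 1 \<and> \<tau> 2 = 0" "\<tau> (Suc 0) = 1" by simp_all
      have "perm_tuple \<tau> ` trip f g h = trip (converse h) (converse g) (converse f)"
        by (rule img_trip[where F="\<lambda>x y z. [z,y,x]"]) (auto simp: perm3 t trip_mem)
      hence ?thesis using T c by blast }
    ultimately show ?thesis by blast
  qed
  then obtain f' g' h' where "f'\<in>GI" "g'\<in>GI" "h'\<in>GI" "perm_tuple \<tau> ` C = trip f' g' h'" by blast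
  moreover have "perm_tuple \<tau> ` C \<noteq> {}" using T by simp
  ultimately show ?thesis unfolding P3_eq by blast
qed

end

theorem lemma2p4:
  fixes V :: "'a set" and G :: "('a \<times> 'a) set set"
  assumes "finite V" and "association_scheme V G"
  shows "m_scheme V 3 (\<lambda>s. if s = 1 then {(\<lambda>v. [v]) ` V}
                          else if s = 2 then rel_tuples ` (G - {Id_on V})
                          else P3_of V G)"
proof -
  interpret AS V G using assms(2) by unfold_locales
  define P where "P = (\<lambda>s::nat. if s = 1 then {(\<lambda>v. [v]) ` V}
                          else if s = 2 then rel_tuples ` (G - {Id_on V})
                          else P3_of V G)"
  have P1: "P 1 = {(\<lambda>v. [v]) ` V}" "P 2 = rel_tuples ` GI" "P 3 = P3_of V G" by (simp_all add: P_def)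
  have A: "m_collection V 3 P" unfolding m_collection_def
  proof
    fix s :: nat assume "s\<in>{1..3}"
    hence "s = 1 \<or> s = 2 \<or> s = 3" by auto
    thus "partition_on (tuples V s) (P s)"
    proof (elim disjE)
      assume "s = 1" thus ?thesis using part1 P1 by simp
    next
      assume "s = 2" thus ?thesis using part2 P1 by simp
    next
      assume "s = 3" thus ?thesis using part3 P1 by simp
    qed
  qed
  have "m_scheme V 3 P" unfolding m_scheme_def
  proof (rule conjI[OF A], rule ballI)
    fix s :: nat assume "s\<in>{2..3}"
    hence "s = 2 \<or> s = 3" by auto
    thus "(\<forall>C\<in>P s. \<forall>u\<in>C. \<forall>v\<in>C. \<forall>i\<in>{1..s}. \<exists>D\<in>P (s - 1). del_coord i u \<in> D \<and> del_coord i v \<in> D) \<and>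
        (\<forall>D\<in>P (s - 1). \<forall>u\<in>D. \<forall>v\<in>D. \<forall>i\<in>{1..s}. \<forall>C\<in>P s.
          card {u'\<in>C. del_coord i u' = u} = card {v'\<in>C. del_coord i v' = v}) \<and>
        (\<forall>C\<in>P s. \<forall>\<tau>. \<tau> permutes {0..<s} \<longrightarrow> perm_tuple \<tau> ` C \<in> P s)"
    proof (elim disjE)
      assume s: "s = 2"
      have e: "s - 1 = 1" using s by simp
      show ?thesis unfolding e unfolding s P1
      proof (intro conjI ballI allI impI)
        fix C u v and i :: nat assume "C \<in> rel_tuples ` GI" "u\<in>C" "v\<in>C" "i\<in>{1..2}"
        thus "\<exists>D\<in>{(\<lambda>v. [v]) ` V}. del_coord i u \<in> D \<and> del_coord i v \<in> D" by (rule compat2)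
      next
        fix D u v C and i :: nat assume "D \<in> {(\<lambda>v. [v]) ` V}" "u\<in>D" "v\<in>D" "i\<in>{1..2}" "C \<in> rel_tuples ` GI"
        thus "card {u'\<in>C. del_coord i u' = u} = card {v'\<in>C. del_coord i v' = v}"
          using reg2[of u v i C] by simp
      next
        fix C and \<tau> :: "nat \<Rightarrow> nat" assume "C \<in> rel_tuples ` GI" "\<tau> permutes {0..<2}"
        thus "perm_tuple \<tau> ` C \<in> rel_tuples ` GI" by (rule inv2)
      qed
    next
      assume s: "s = 3"
      have e: "s - 1 = 2" using s by simp
      show ?thesis unfolding e unfolding s P1
      proof (intro conjI ballI allI impI)
        fix C u v and i :: nat assume "C \<in> P3_of V G" "u\<in>C" "v\<in>C" "i\<in>{1..3}"
        thus "\<exists>D\<in>rel_tuples ` GI. del_coord i u \<in> D \<and> del_coord i v \<in> D" by (rule compat3)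
      next
        fix D u v C and i :: nat assume "D \<in> rel_tuples ` GI" "u\<in>D" "v\<in>D" "i\<in>{1..3}" "C \<in> P3_of V G"
        thus "card {u'\<in>C. del_coord i u' = u} = card {v'\<in>C. del_coord i v' = v}"
          by (rule reg3)
      next
        fix C and \<tau> :: "nat \<Rightarrow> nat" assume "C \<in> P3_of V G" "\<tau> permutes {0..<3}"
        thus "perm_tuple \<tau> ` C \<in> P3_of V G" by (rule inv3)
      qed
    qed
  qed
  thus ?thesis unfolding P_def .
qed

end
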